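(* Let $\langle-,-\rangle$ be a cyclic form on $C$. Then: (1) $\langle e,\mu(v_1,\dots,v_n)\rangle=0$ for $n\le m-1$; (2) $\langle\mu(v_1,\dots,v_n),\mu(w_1,\dots,w_l)\rangle=0$ for $l\le m-1$ whenever each $v_i\in\mathrm{Span}\{w_1,\dots,w_l\}$.
   Context: $k$ is a field of characteristic zero, $V$ a $k$-vector space of dimension $m\ge1$ in degree $0$, $A=\mathrm{Sym}(V)$, and $C=A^{\textup{!`}}$ its Koszul dual coalgebra, the exterior coalgebra on $sV$ with elements $\mu(v_1,\dots,v_n)=sv_1\wedge\cdots\wedge sv_n$ (in all statements the $v_i$, resp. $w_j$, are taken linearly independent), counit/coaugmentation element $e$ (the empty wedge), and coproduct $\triangle\mu(v_1,\dots,v_n)=\sum_{p=0}^n\sum_{\sigma\in Sh_{p,n-p}}\mathrm{sgn}(\sigma)\,\mu(v_{\sigma(1)},\dots,v_{\sigma(p)})\otimes\mu(v_{\sigma(p+1)},\dots,v_{\sigma(n)})$ over $(p,n-p)$-shuffles. A symmetric bilinear form of degree $-d$ on $C$ is $\langle-,-\rangle:C\otimes C\to k[d]$ with $\langle a,b\rangle=(-1)^{|a||b|}\langle b,a\rangle$; it is cyclic if $\sum\langle a,b^2\rangle b^1=\sum\langle a^1,b\rangle a^2$ for all $a,b\in C$, where $\triangle(a)=\sum a^1\otimes a^2$, $\triangle(b)=\sum b^1\otimes b^2$. *)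

theory Defs
  imports "HOL-Combinatorics.Permutations"
begin

text \<open>Model: V = k^m with standard basis b_0,...,b_{m-1}; vectors are functions
  nat => k vanishing at coordinates >= m. C = exterior coalgebra on sV, with basis
  e_S = s b_{s_1} wedge ... wedge s b_{s_p} for S = {s_1 < ... < s_p} a subset of {..<m};
  an element of C is its coefficient function on such sets.  C (x) C is represented by
  coefficient functions on pairs of sets.\<close>

definition vecs :: "nat \<Rightarrow> (nat \<Rightarrow> 'k::field) set" where
  "vecs m = {x. \<forall>i\<ge>m. x i = 0}"

definition Cel :: "nat \<Rightarrow> (nat set \<Rightarrow> 'k::field) set" where
  "Cel m = {a. \<forall>S. \<not> S \<subseteq> {..<m} \<longrightarrow> a S = 0}"

definition basis_el :: "nat set \<Rightarrow> nat set \<Rightarrow> 'k::field" where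
  "basis_el S = (\<lambda>T. if T = S then 1 else 0)"

definition unit_el :: "nat set \<Rightarrow> 'k::field" where
  "unit_el = basis_el {}"

text \<open>Sign of the shuffle putting T first and U second (both listed increasingly).\<close>
definition shsign :: "nat set \<Rightarrow> nat set \<Rightarrow> 'k::field" where
  "shsign T U = (-1) ^ card {(t, u). t \<in> T \<and> u \<in> U \<and> u < t}"

definition coprod :: "(nat set \<Rightarrow> 'k::field) \<Rightarrow> nat set \<Rightarrow> nat set \<Rightarrow> 'k" where
  "coprod a T U = (if T \<inter> U = {} then shsign T U * a (T \<union> U) else 0)"

text \<open>mu(v_0,...,v_{n-1}) = s v_0 wedge ... wedge s v_{n-1}, coefficient on e_S.\<close>
definition mu :: "nat \<Rightarrow> (nat \<Rightarrow> nat \<Rightarrow> 'k::field) \<Rightarrow> nat set \<Rightarrow> 'k" where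
  "mu n v S = (if finite S \<and> card S = n then
      (\<Sum>p\<in>{p. p permutes {..<n}}. of_int (sign p) *
          (\<Prod>i<n. v i (sorted_list_of_set S ! p i)))
    else 0)"

text \<open>Bilinear form on C given by its values B S T = <e_S, e_T> on basis elements.\<close>
definition form :: "nat \<Rightarrow> (nat set \<Rightarrow> nat set \<Rightarrow> 'k::field)
    \<Rightarrow> (nat set \<Rightarrow> 'k) \<Rightarrow> (nat set \<Rightarrow> 'k) \<Rightarrow> 'k" where
  "form m B a b = (\<Sum>S\<in>Pow {..<m}. \<Sum>T\<in>Pow {..<m}. a S * b T * B S T)"

text \<open>Symmetric bilinear form of degree -d (degree of e_S is card S).\<close>
definition symmetric_form_deg :: "nat \<Rightarrow> int \<Rightarrow> (nat set \<Rightarrow> nat set \<Rightarrow> 'k::field) \<Rightarrow> bool" where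
  "symmetric_form_deg m d B \<longleftrightarrow>
     (\<forall>S\<subseteq>{..<m}. \<forall>T\<subseteq>{..<m}.
        (B S T \<noteq> 0 \<longrightarrow> int (card S + card T) = d) \<and>
        B S T = (-1) ^ (card S * card T) * B T S)"

text \<open>Cyclicity: sum <a,b^2> b^1 = sum <a^1,b> a^2 in C, for all a, b in C.\<close>
definition cyclic_form :: "nat \<Rightarrow> (nat set \<Rightarrow> nat set \<Rightarrow> 'k::field) \<Rightarrow> bool" where
  "cyclic_form m B \<longleftrightarrow>
     (\<forall>a\<in>Cel m. \<forall>b\<in>Cel m. \<forall>X\<subseteq>{..<m}.
        (\<Sum>U\<in>Pow {..<m}. coprod b X U * form m B a (basis_el U))
      = (\<Sum>Y\<in>Pow {..<m}. coprod a Y X * form m B (basis_el Y) b))"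

definition lin_indep :: "nat \<Rightarrow> (nat \<Rightarrow> nat \<Rightarrow> 'k::field) \<Rightarrow> bool" where
  "lin_indep n v \<longleftrightarrow> (\<forall>c. (\<forall>j. (\<Sum>i<n. c i * v i j) = 0) \<longrightarrow> (\<forall>i<n. c i = 0))"

definition in_span :: "nat \<Rightarrow> (nat \<Rightarrow> nat \<Rightarrow> 'k::field) \<Rightarrow> (nat \<Rightarrow> 'k) \<Rightarrow> bool" where
  "in_span l w x \<longleftrightarrow> (\<exists>c. \<forall>j. x j = (\<Sum>i<l. c i * w i j))"

end

theory Submission
  imports Defs "Jordan_Normal_Form.Determinant"
begin


definition Dm :: "nat \<Rightarrow> (nat \<Rightarrow> nat \<Rightarrow> 'a::comm_ring_1) \<Rightarrow> 'a" where
  "Dm N F = det (mat N N (\<lambda>(i,k). F k i))"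

lemma Dm_cong: "(\<And>k i. k < N \<Longrightarrow> i < N \<Longrightarrow> F k i = G k i) \<Longrightarrow> Dm N F = Dm N G"
  unfolding Dm_def by (intro arg_cong[of _ _ det] eq_matI) auto

lemma Dm_expand: "Dm N F = (\<Sum>p\<in>{p. p permutes {..<N}}. of_int (sign p) * (\<Prod>i<N. F (p i) i))"
proof -
  have "Dm N F = (\<Sum>p\<in>{p. p permutes {0..<N}}. of_int (sign p) * (\<Prod>i=0..<N. mat N N (\<lambda>(i,k). F k i) $$ (i, p i)))"
    unfolding Dm_def by (rule det_def') auto
  also have "\<dots> = (\<Sum>p\<in>{p. p permutes {..<N}}. of_int (sign p) * (\<Prod>i<N. F (p i) i))"
  proof (rule sum.cong)
    show "{p. p permutes {0..<N}} = {p. p permutes {..<N}}" by (simp add: atLeast0LessThan)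
  next
    fix p assume "p \<in> {p. p permutes {..<N}}"
    then have p: "p permutes {..<N}" by simp
    have "\<And>i. i < N \<Longrightarrow> p i < N" using permutes_in_image[OF p] by auto
    then show "of_int (sign p) * (\<Prod>i=0..<N. mat N N (\<lambda>(i,k). F k i) $$ (i, p i)) = of_int (sign p) * (\<Prod>i<N. F (p i) i)"
      by (simp add: atLeast0LessThan)
  qed
  finally show ?thesis .
qed

lemma mu_Dm: "finite S \<Longrightarrow> card S = n \<Longrightarrow> mu n v S = Dm n (\<lambda>k i. v i (sorted_list_of_set S ! k))"
  unfolding mu_def Dm_expand by simp

lemma prod_upd:
  fixes N :: nat and p :: "nat \<Rightarrow> nat"
  assumes p: "p permutes {..<N}" and k: "k < N"
  shows "(\<Prod>i<N. (F(k := H)) (p i) i) = H (Hilbert_Choice.inv p k) * (\<Prod>i\<in>{..<N} - {Hilbert_Choice.inv p k}. F (p i) i)"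
proof -
  let ?q = "Hilbert_Choice.inv p k"
  have ik: "?q \<in> {..<N}" using permutes_in_image[OF permutes_inv[OF p], of k] k by simp
  have pik: "p ?q = k" using permutes_inverses(1)[OF p] .
  have "(\<Prod>i<N. (F(k := H)) (p i) i) = (F(k := H)) (p ?q) ?q * (\<Prod>i\<in>{..<N} - {?q}. (F(k := H)) (p i) i)"
    using ik by (intro prod.remove) simp_all
  also have "(\<Prod>i\<in>{..<N} - {?q}. (F(k := H)) (p i) i) = (\<Prod>i\<in>{..<N} - {?q}. F (p i) i)"
  proof (rule prod.cong[OF refl])
    fix i assume i: "i \<in> {..<N} - {?q}"
    have "p i \<noteq> k"
    proof
      assume "p i = k"
      then have "?q = i" using permutes_inverses(2)[OF p, of i] by simp
      then show False using i by simp
    qed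
    then show "(F(k := H)) (p i) i = F (p i) i" by simp
  qed
  finally show ?thesis using pik by simp
qed

lemma Dm_lin:
  fixes F :: "nat \<Rightarrow> nat \<Rightarrow> 'a::comm_ring_1"
  assumes k: "k < N" and J: "finite J"
  shows "Dm N (F(k := (\<lambda>i. \<Sum>j\<in>J. c j * G j i))) = (\<Sum>j\<in>J. c j * Dm N (F(k := G j)))"
proof -
  define R where "R (p::nat\<Rightarrow>nat) = (\<Prod>i\<in>{..<N} - {Hilbert_Choice.inv p k}. F (p i) i)" for p
  define P where "P = {p::nat\<Rightarrow>nat. p permutes {..<N}}"
  define s where "s (p::nat\<Rightarrow>nat) = (of_int (sign p) :: 'a)" for p
  have e1: "\<And>H. Dm N (F(k := H)) = (\<Sum>p\<in>P. s p * (H (Hilbert_Choice.inv p k) * R p))"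
  proof -
    fix H
    show "Dm N (F(k := H)) = (\<Sum>p\<in>P. s p * (H (Hilbert_Choice.inv p k) * R p))"
      unfolding Dm_expand P_def s_def R_def
    proof (rule sum.cong[OF refl])
      fix p assume "p \<in> {p. p permutes {..<N}}"
      then have p: "p permutes {..<N}" by simp
      show "of_int (sign p) * (\<Prod>i<N. (F(k := H)) (p i) i) = of_int (sign p) * (H (Hilbert_Choice.inv p k) * (\<Prod>i\<in>{..<N} - {Hilbert_Choice.inv p k}. F (p i) i))"
        by (subst prod_upd[OF p k]) (rule refl)
    qed
  qed
  have "Dm N (F(k := (\<lambda>i. \<Sum>j\<in>J. c j * G j i))) = (\<Sum>p\<in>P. s p * ((\<Sum>j\<in>J. c j * G j (Hilbert_Choice.inv p k)) * R p))"
    by (rule e1)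
  also have "\<dots> = (\<Sum>p\<in>P. \<Sum>j\<in>J. c j * (s p * (G j (Hilbert_Choice.inv p k) * R p)))"
    by (rule sum.cong[OF refl]) (simp add: sum_distrib_left sum_distrib_right mult_ac)
  also have "\<dots> = (\<Sum>j\<in>J. \<Sum>p\<in>P. c j * (s p * (G j (Hilbert_Choice.inv p k) * R p)))"
    by (rule sum.swap)
  also have "\<dots> = (\<Sum>j\<in>J. c j * Dm N (F(k := G j)))"
    by (rule sum.cong[OF refl]) (simp add: e1 sum_distrib_left)
  finally show ?thesis .
qed

lemma Dm_swap:
  assumes "a < N" "b < N" "a \<noteq> b"
  shows "Dm N (\<lambda>k. if k = a then F b else if k = b then F a else F k) = - Dm N F"
proof -
  have "swapcols a b (mat N N (\<lambda>(i,k). F k i)) = mat N N (\<lambda>(i,k). (if k = a then F b else if k = b then F a else F k) i)"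
    using assms by (intro eq_matI) (auto simp: mat_swapcols_def)
  then show ?thesis unfolding Dm_def using det_swapcols[OF assms, of "mat N N (\<lambda>(i,k). F k i)"] by simp
qed

lemma Dm_ident:
  fixes F :: "nat \<Rightarrow> nat \<Rightarrow> 'a::field_char_0"
  assumes "a < N" "b < N" "a \<noteq> b" "\<And>i. i < N \<Longrightarrow> F a i = F b i"
  shows "Dm N F = 0"
proof -
  have "Dm N (\<lambda>k. if k = a then F b else if k = b then F a else F k) = Dm N F"
    by (rule Dm_cong) (auto simp: assms(4))
  then have "Dm N F = - Dm N F" using Dm_swap[OF assms(1-3), where F=F] by simp
  then show ?thesis by simp
qed

lemma Dm_lap:
  assumes "\<And>i. i < Suc N \<Longrightarrow> F 0 i = (if i = 0 then 1 else 0)"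
  shows "Dm (Suc N) F = Dm N (\<lambda>k i. F (Suc k) (Suc i))"
proof -
  let ?A = "mat (Suc N) (Suc N) (\<lambda>(i,k). F k i)"
  have "det ?A = (\<Sum>i<Suc N. ?A $$ (i,0) * cofactor ?A i 0)"
    by (rule laplace_expansion_column) auto
  also have "\<dots> = cofactor ?A 0 0"
    using assms by (subst sum.remove[of _ 0]) auto
  also have "\<dots> = det (mat_delete ?A 0 0)" by (simp add: cofactor_def)
  also have "mat_delete ?A 0 0 = mat N N (\<lambda>(i,k). F (Suc k) (Suc i))"
    by (rule eq_matI) (auto simp: mat_delete_def)
  finally show ?thesis unfolding Dm_def .
qed


lemma nth_swap_adj:
  "(xs @ b # a # r) ! k = (if k = length xs then (xs @ a # b # r) ! Suc (length xs)
     else if k = Suc (length xs) then (xs @ a # b # r) ! length xs else (xs @ a # b # r) ! k)"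
  by (cases "k < length xs") (auto simp: nth_append nth_Cons')

lemma Dm_move:
  assumes "length (xs @ a # ys @ zs) = N"
  shows "Dm N (\<lambda>k i. u i ((xs @ a # ys @ zs) ! k)) = (-1)^length ys * Dm N (\<lambda>k i. u i ((xs @ ys @ a # zs) ! k))"
  using assms
proof (induction ys arbitrary: xs)
  case Nil
  then show ?case by simp
next
  case (Cons b ys)
  let ?L = "xs @ a # b # ys @ zs"
  let ?L' = "(xs @ [b]) @ a # ys @ zs"
  let ?F = "\<lambda>k i. u i (?L ! k)"
  have len: "length xs < N" "Suc (length xs) < N" using Cons.prems by auto
  have "Dm N (\<lambda>k. if k = length xs then ?F (Suc (length xs)) else if k = Suc (length xs) then ?F (length xs) else ?F k) = - Dm N ?F"
    by (rule Dm_swap) (use len in auto)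
  moreover have "Dm N (\<lambda>k. if k = length xs then ?F (Suc (length xs)) else if k = Suc (length xs) then ?F (length xs) else ?F k)
      = Dm N (\<lambda>k i. u i (?L' ! k))"
  proof (rule Dm_cong)
    fix k i assume "k < N" "i < N"
    have e: "?L' ! k = (if k = length xs then ?L ! Suc (length xs) else if k = Suc (length xs) then ?L ! length xs else ?L ! k)"
      using nth_swap_adj[of xs b a "ys @ zs" k] by simp
    show "(if k = length xs then ?F (Suc (length xs)) else if k = Suc (length xs) then ?F (length xs) else ?F k) i = u i (?L' ! k)"
      unfolding e by simp
  qed
  moreover have "Dm N (\<lambda>k i. u i (?L' ! k)) = (-1)^length ys * Dm N (\<lambda>k i. u i (((xs @ [b]) @ ys @ a # zs) ! k))"
    by (rule Cons.IH) (use Cons.prems in simp)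
  ultimately have h: "- Dm N ?F = (-1)^length ys * Dm N (\<lambda>k i. u i ((xs @ b # ys @ a # zs) ! k))" by simp
  then have "Dm N ?F = - ((-1)^length ys * Dm N (\<lambda>k i. u i ((xs @ b # ys @ a # zs) ! k)))" by (metis minus_minus)
  then show ?case by simp
qed

lemma sorted_split:
  fixes Y :: "nat set"
  assumes "finite Y" "j \<notin> Y"
  shows "sorted_list_of_set Y = sorted_list_of_set {t\<in>Y. t<j} @ sorted_list_of_set {t\<in>Y. j<t}"
    and "sorted_list_of_set (insert j Y) = sorted_list_of_set {t\<in>Y. t<j} @ j # sorted_list_of_set {t\<in>Y. j<t}"
proof -
  let ?L = "sorted_list_of_set {t\<in>Y. t<j}" and ?R = "sorted_list_of_set {t\<in>Y. j<t}"
  have fL: "finite {t\<in>Y. t<j}" and fR: "finite {t\<in>Y. j<t}" using assms by auto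
  have sL: "set ?L = {t\<in>Y. t<j}" and sR: "set ?R = {t\<in>Y. j<t}" using fL fR by auto
  have Y: "Y = {t\<in>Y. t<j} \<union> {t\<in>Y. j<t}"
  proof (intro equalityI subsetI)
    fix x assume x: "x \<in> Y"
    then have "x \<noteq> j" using assms(2) by auto
    then have "x < j \<or> j < x" by linarith
    then show "x \<in> {t\<in>Y. t<j} \<union> {t\<in>Y. j<t}" using x by auto
  qed auto
  have lr: "\<forall>x\<in>set ?L. \<forall>y\<in>set ?R. x < y" using sL sR by auto
  have srt: "sorted ?L" "sorted ?R" "distinct ?L" "distinct ?R" by auto
  have d: "set ?L \<inter> set ?R = {}" using lr by auto
  have lrle: "\<forall>x\<in>set ?L. \<forall>y\<in>set ?R. x \<le> y" using lr by (meson less_imp_le)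
  have Lj: "\<forall>x\<in>set ?L. x \<le> j" using sL by simp
  have jR: "\<forall>y\<in>set ?R. j \<le> y" using sR by simp
  have lrle2: "\<forall>x\<in>set ?L. \<forall>y\<in>set (j # ?R). x \<le> y" using lrle Lj by simp
  have sjR: "sorted (j # ?R)" using jR srt by simp
  show "sorted_list_of_set Y = ?L @ ?R"
  proof -
    have "sorted (?L @ ?R)" unfolding sorted_append using srt lrle by blast
    moreover have "distinct (?L @ ?R)" using srt d by simp
    moreover have "set (?L @ ?R) = Y" using sL sR by (simp add: Y[symmetric])
    ultimately show ?thesis using assms(1) by (intro sorted_distinct_set_unique) simp_all
  qed
  show "sorted_list_of_set (insert j Y) = ?L @ j # ?R"
  proof -
    have fi: "finite (insert j Y)" using assms(1) by simp
    have h1: "sorted (?L @ j # ?R)" unfolding sorted_append using srt sjR lrle2 by blast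
    have h2: "distinct (?L @ j # ?R)" using srt d sL sR by auto
    have h3: "set (?L @ j # ?R) = insert j Y" using sL sR by (simp add: Y[symmetric])
    have a1: "sorted (sorted_list_of_set (insert j Y))" by (rule sorted_sorted_list_of_set)
    have a2: "distinct (sorted_list_of_set (insert j Y))" by (rule distinct_sorted_list_of_set)
    have a3: "set (sorted_list_of_set (insert j Y)) = insert j Y" using fi by (rule set_sorted_list_of_set)
    show ?thesis by (rule sorted_distinct_set_unique[OF a1 a2 h1 h2]) (simp only: a3 h3)
  qed
qed

lemma shsign_l:
  assumes "finite U"
  shows "shsign {j} U = (-1) ^ card {u\<in>U. u<j}"
proof -
  have "{(t, u). t \<in> {j} \<and> u \<in> U \<and> u < t} = (\<lambda>u. (j, u)) ` {u\<in>U. u<j}" by auto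
  moreover have "card ((\<lambda>u. (j, u)) ` {u\<in>U. u<j}) = card {u\<in>U. u<j}"
    by (rule card_image) (auto simp: inj_on_def)
  ultimately show ?thesis unfolding shsign_def by simp
qed

lemma shsign_r:
  assumes "finite Y"
  shows "shsign Y {j} = (-1) ^ card {t\<in>Y. j<t}"
proof -
  have "{(t, u). t \<in> Y \<and> u \<in> {j} \<and> u < t} = (\<lambda>t. (t, j)) ` {t\<in>Y. j<t}" by auto
  moreover have "card ((\<lambda>t. (t, j)) ` {t\<in>Y. j<t}) = card {t\<in>Y. j<t}"
    by (rule card_image) (auto simp: inj_on_def)
  ultimately show ?thesis unfolding shsign_def by simp
qed

lemma contr_right:
  assumes Y: "finite Y" "j \<notin> Y" and n: "card Y + 1 = n"
  shows "Dm n (\<lambda>k i. v i ((sorted_list_of_set Y @ [j]) ! k)) = shsign Y {j} * mu n v (insert j Y)"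
proof -
  let ?L = "sorted_list_of_set {t\<in>Y. t<j}" and ?R = "sorted_list_of_set {t\<in>Y. j<t}"
  have lenR: "length ?R = card {t\<in>Y. j<t}" by simp
  have cY: "card Y = length ?L + length ?R" using arg_cong[OF sorted_split(1)[OF Y], of length] by simp
  have len: "length (?L @ j # ?R @ []) = n" using cY n by simp
  have "mu n v (insert j Y) = Dm n (\<lambda>k i. v i ((?L @ j # ?R @ []) ! k))"
    using mu_Dm[of "insert j Y" n v] sorted_split(2)[OF Y] Y n by simp
  also have "\<dots> = (-1)^length ?R * Dm n (\<lambda>k i. v i ((?L @ ?R @ [j]) ! k))"
    by (rule Dm_move[OF len])
  finally have e: "mu n v (insert j Y) = (-1)^length ?R * Dm n (\<lambda>k i. v i ((?L @ ?R @ [j]) ! k))" .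
  have "shsign Y {j} * mu n v (insert j Y) = ((-1)^length ?R * (-1)^length ?R) * Dm n (\<lambda>k i. v i ((?L @ ?R @ [j]) ! k))"
    unfolding e shsign_r[OF Y(1)] lenR by (simp add: mult_ac)
  also have "\<dots> = Dm n (\<lambda>k i. v i ((sorted_list_of_set Y @ [j]) ! k))"
    by (simp add: sorted_split(1)[OF Y] flip: power_add mult_2)
  finally show ?thesis by simp
qed

lemma contr_left:
  assumes U: "finite U" "j \<notin> U" and n: "card U + 1 = n"
  shows "Dm n (\<lambda>k i. v i ((j # sorted_list_of_set U) ! k)) = shsign {j} U * mu n v (insert j U)"
proof -
  let ?L = "sorted_list_of_set {t\<in>U. t<j}" and ?R = "sorted_list_of_set {t\<in>U. j<t}"
  have lenL: "length ?L = card {t\<in>U. t<j}" by simp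
  have cY: "card U = length ?L + length ?R" using arg_cong[OF sorted_split(1)[OF U], of length] by simp
  have len: "length ([] @ j # ?L @ ?R) = n" using cY n by simp
  have "Dm n (\<lambda>k i. v i (([] @ j # ?L @ ?R) ! k)) = (-1)^length ?L * Dm n (\<lambda>k i. v i (([] @ ?L @ j # ?R) ! k))"
    by (rule Dm_move[OF len])
  also have "Dm n (\<lambda>k i. v i (([] @ ?L @ j # ?R) ! k)) = mu n v (insert j U)"
    using mu_Dm[of "insert j U" n v] sorted_split(2)[OF U] U n by simp
  finally have c: "Dm n (\<lambda>k i. v i ((j # ?L @ ?R) ! k)) = (-1)^length ?L * mu n v (insert j U)" by simp
  have sh: "shsign {j} U = (-1)^length ?L" using shsign_l[OF U(1), of j] lenL by simp
  show ?thesis unfolding sorted_split(1)[OF U] sh c ..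
qed



lemma form_cong_r: "(\<And>T. T \<subseteq> {..<m} \<Longrightarrow> b T = b' T) \<Longrightarrow> form m B a b = form m B a b'"
  unfolding form_def by (intro sum.cong refl) auto

lemma form_cong_l: "(\<And>T. T \<subseteq> {..<m} \<Longrightarrow> a T = a' T) \<Longrightarrow> form m B a b = form m B a' b"
  unfolding form_def by (intro sum.cong refl) auto

lemma form_zero_l: "form m B (\<lambda>_. 0) b = 0"
  unfolding form_def by simp

lemma form_basis_right:
  assumes "U \<subseteq> {..<m}"
  shows "form m B a (basis_el U) = (\<Sum>S\<in>Pow {..<m}. a S * B S U)"
  unfolding form_def basis_el_def
proof (rule sum.cong[OF refl])
  fix S
  have "(\<Sum>T\<in>Pow {..<m}. a S * (if T = U then 1 else 0) * B S T) = (\<Sum>T\<in>Pow {..<m}. if T = U then a S * B S U else 0)"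
    by (rule sum.cong) auto
  also have "\<dots> = a S * B S U" using assms by simp
  finally show "(\<Sum>T\<in>Pow {..<m}. a S * (if T = U then 1 else 0) * B S T) = a S * B S U" .
qed

lemma form_basis_left:
  assumes "Y \<subseteq> {..<m}"
  shows "form m B (basis_el Y) b = (\<Sum>T\<in>Pow {..<m}. b T * B Y T)"
proof -
  have "form m B (basis_el Y) b = (\<Sum>S\<in>Pow {..<m}. if S = Y then (\<Sum>T\<in>Pow {..<m}. b T * B Y T) else 0)"
    unfolding form_def basis_el_def by (rule sum.cong) (auto intro: sum.neutral)
  also have "\<dots> = (\<Sum>T\<in>Pow {..<m}. b T * B Y T)" using assms by simp
  finally show ?thesis .
qed

lemma basis_Cel: "S \<subseteq> {..<m} \<Longrightarrow> basis_el S \<in> Cel m"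
  unfolding Cel_def basis_el_def by auto

lemma cyc_contr:
  assumes cyc: "cyclic_form m B" and a: "a \<in> Cel m" and b: "b \<in> Cel m"
  shows "form m B a (\<lambda>U. \<Sum>j<m. lam j * coprod b {j} U) = form m B (\<lambda>Y. \<Sum>j<m. lam j * coprod a Y {j}) b"
proof -
  let ?P = "Pow {..<m}"
  have E: "(\<Sum>U\<in>?P. coprod b {j} U * (\<Sum>S\<in>?P. a S * B S U)) = (\<Sum>Y\<in>?P. coprod a Y {j} * (\<Sum>T\<in>?P. b T * B Y T))"
    if j: "j < m" for j
  proof -
    have "(\<Sum>U\<in>?P. coprod b {j} U * form m B a (basis_el U)) = (\<Sum>Y\<in>?P. coprod a Y {j} * form m B (basis_el Y) b)"
      using cyc a b j unfolding cyclic_form_def by auto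
    moreover have "(\<Sum>U\<in>?P. coprod b {j} U * form m B a (basis_el U)) = (\<Sum>U\<in>?P. coprod b {j} U * (\<Sum>S\<in>?P. a S * B S U))"
      by (rule sum.cong[OF refl]) (simp add: form_basis_right)
    moreover have "(\<Sum>Y\<in>?P. coprod a Y {j} * form m B (basis_el Y) b) = (\<Sum>Y\<in>?P. coprod a Y {j} * (\<Sum>T\<in>?P. b T * B Y T))"
      by (rule sum.cong[OF refl]) (simp add: form_basis_left)
    ultimately show ?thesis by simp
  qed
  have "form m B a (\<lambda>U. \<Sum>j<m. lam j * coprod b {j} U) = (\<Sum>S\<in>?P. \<Sum>U\<in>?P. \<Sum>j<m. lam j * (coprod b {j} U * (a S * B S U)))"
    unfolding form_def by (simp add: sum_distrib_left sum_distrib_right mult_ac)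
  also have "\<dots> = (\<Sum>S\<in>?P. \<Sum>j<m. \<Sum>U\<in>?P. lam j * (coprod b {j} U * (a S * B S U)))"
    by (rule sum.cong[OF refl], rule sum.swap)
  also have "\<dots> = (\<Sum>j<m. \<Sum>S\<in>?P. \<Sum>U\<in>?P. lam j * (coprod b {j} U * (a S * B S U)))"
    by (rule sum.swap)
  also have "\<dots> = (\<Sum>j<m. \<Sum>U\<in>?P. \<Sum>S\<in>?P. lam j * (coprod b {j} U * (a S * B S U)))"
    by (rule sum.cong[OF refl], rule sum.swap)
  also have "\<dots> = (\<Sum>j<m. lam j * (\<Sum>U\<in>?P. coprod b {j} U * (\<Sum>S\<in>?P. a S * B S U)))"
    by (simp add: sum_distrib_left)
  also have "\<dots> = (\<Sum>j<m. lam j * (\<Sum>Y\<in>?P. coprod a Y {j} * (\<Sum>T\<in>?P. b T * B Y T)))"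
    by (rule sum.cong[OF refl]) (simp add: E)
  also have "\<dots> = (\<Sum>j<m. \<Sum>Y\<in>?P. \<Sum>T\<in>?P. lam j * (coprod a Y {j} * (b T * B Y T)))"
    by (simp add: sum_distrib_left)
  also have "\<dots> = (\<Sum>Y\<in>?P. \<Sum>j<m. \<Sum>T\<in>?P. lam j * (coprod a Y {j} * (b T * B Y T)))"
    by (rule sum.swap)
  also have "\<dots> = (\<Sum>Y\<in>?P. \<Sum>T\<in>?P. \<Sum>j<m. lam j * (coprod a Y {j} * (b T * B Y T)))"
    by (rule sum.cong[OF refl], rule sum.swap)
  also have "\<dots> = form m B (\<lambda>Y. \<Sum>j<m. lam j * coprod a Y {j}) b"
    unfolding form_def by (simp add: sum_distrib_left sum_distrib_right mult_ac)
  finally show ?thesis .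
qed

lemma mu_Cel:
  assumes v: "\<forall>i<n. v i \<in> vecs m"
  shows "mu n v \<in> Cel m"
  unfolding Cel_def
proof (intro CollectI allI impI)
  fix S :: "nat set" assume S: "\<not> S \<subseteq> {..<m}"
  show "mu n v S = 0"
  proof (cases "finite S \<and> card S = n")
    case False then show ?thesis unfolding mu_def by auto
  next
    case True
    then have fS: "finite S" and cS: "card S = n" by auto
    obtain s where s: "s \<in> S" "s \<ge> m" using S by (metis lessThan_iff not_le subsetI)
    then have "s \<in> set (sorted_list_of_set S)" using fS by simp
    then obtain q where q: "q < length (sorted_list_of_set S)" "sorted_list_of_set S ! q = s"
      by (auto simp: in_set_conv_nth)
    have qn: "q < n" using q cS by simp
    have pz: "(\<Prod>i<n. v i (sorted_list_of_set S ! p i)) = 0" if p: "p permutes {..<n}" for p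
    proof (rule prod_zero)
      let ?i = "Hilbert_Choice.inv p q"
      have i: "?i \<in> {..<n}" using permutes_in_image[OF permutes_inv[OF p], of q] qn by simp
      have "p ?i = q" using permutes_inverses(1)[OF p] .
      then have "v ?i (sorted_list_of_set S ! p ?i) = 0" using q s v i unfolding vecs_def by auto
      then show "\<exists>i\<in>{..<n}. v i (sorted_list_of_set S ! p i) = 0" using i by blast
    qed simp
    have "(\<Sum>p\<in>{p. p permutes {..<n}}. of_int (sign p) * (\<Prod>i<n. v i (sorted_list_of_set S ! p i))) = (0::'a)"
      by (rule sum.neutral) (simp add: pz)
    then show ?thesis unfolding mu_def using True by simp
  qed
qed



lemma annih:
  fixes w :: "nat \<Rightarrow> nat \<Rightarrow> 'k::field"
  assumes lm: "l < m"
  shows "\<exists>lam. (\<forall>i<l. (\<Sum>j<m. lam j * w i j) = 0) \<and> (\<exists>j0<m. lam j0 \<noteq> 0)"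
proof -
  let ?A = "mat m m (\<lambda>(i,j). if i < l then w i j else 0) :: 'k mat"
  have A: "?A \<in> carrier_mat m m" by simp
  have "det ?A = 0"
  proof -
    have "(\<Prod>i=0..<m. ?A $$ (i, p i)) = 0" if p: "p permutes {0..<m}" for p
    proof (rule prod_zero)
      have "p (m - 1) < m" using permutes_in_image[OF p, of "m - 1"] lm by simp
      then have "?A $$ (m - 1, p (m - 1)) = 0" using lm by simp
      then show "\<exists>i\<in>{0..<m}. ?A $$ (i, p i) = 0" using lm by (intro bexI[of _ "m - 1"]) auto
    qed simp
    then show ?thesis unfolding det_def'[OF A] by (intro sum.neutral) simp
  qed
  then obtain vv where vv: "vv \<in> carrier_vec m" "vv \<noteq> 0\<^sub>v m" "?A *\<^sub>v vv = 0\<^sub>v m"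
    using det_0_iff_vec_prod_zero_field[OF A] by blast
  define lam where "lam j = vv $ j" for j
  have "\<exists>j0<m. lam j0 \<noteq> 0"
  proof (rule ccontr)
    assume "\<not> (\<exists>j0<m. lam j0 \<noteq> 0)"
    then have "vv = 0\<^sub>v m" using vv(1) unfolding lam_def by (intro eq_vecI) auto
    then show False using vv(2) by simp
  qed
  moreover have "(\<Sum>j<m. lam j * w i j) = 0" if i: "i < l" for i
  proof -
    have im: "i < m" using i lm by simp
    have "(?A *\<^sub>v vv) $ i = 0" using vv(3) im by simp
    then have "row ?A i \<bullet> vv = 0" using im by simp
    then have "(\<Sum>j=0..<m. w i j * vv $ j) = 0"
      using vv(1) im i unfolding scalar_prod_def by simp
    then show ?thesis unfolding lam_def by (simp add: atLeast0LessThan mult.commute)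
  qed
  ultimately show ?thesis by blast
qed

lemma form_basis_both:
  assumes S: "S \<subseteq> {..<m}" and T: "T \<subseteq> {..<m}"
  shows "form m B (basis_el S) (basis_el T) = B S T"
proof -
  have "form m B (basis_el S) (basis_el T) = (\<Sum>T'\<in>Pow {..<m}. basis_el T T' * B S T')"
    by (rule form_basis_left[OF S])
  also have "\<dots> = (\<Sum>T'\<in>Pow {..<m}. if T' = T then B S T else 0)"
    by (rule sum.cong) (auto simp: basis_el_def)
  also have "\<dots> = B S T" using T by simp
  finally show ?thesis .
qed

lemma B_empty_zero:
  fixes B :: "nat set \<Rightarrow> nat set \<Rightarrow> 'k::field"
  assumes cyc: "cyclic_form m B" and T: "T \<subseteq> {..<m}" and x: "x < m" "x \<notin> T"
  shows "B {} T = 0"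
proof -
  let ?P = "Pow {..<m}"
  have "(\<Sum>U\<in>?P. coprod (basis_el T) {x} U * form m B (basis_el {x}) (basis_el U))
      = (\<Sum>Y\<in>?P. coprod (basis_el {x}) Y {x} * form m B (basis_el Y) (basis_el T))"
  proof -
    have bx: "basis_el {x} \<in> Cel m" using x by (intro basis_Cel) auto
    have xs: "{x} \<subseteq> {..<m}" using x by auto
    show ?thesis using cyc unfolding cyclic_form_def using bx basis_Cel[OF T] xs by blast
  qed
  moreover have "(\<Sum>U\<in>?P. coprod (basis_el T) {x} U * form m B (basis_el {x}) (basis_el U)) = 0"
  proof (rule sum.neutral, intro ballI)
    fix U
    have "({x} \<union> U) \<noteq> T" using x by auto
    then show "coprod (basis_el T) {x} U * form m B (basis_el {x}) (basis_el U) = 0"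
      unfolding coprod_def basis_el_def by simp
  qed
  moreover have "(\<Sum>Y\<in>?P. coprod (basis_el {x}) Y {x} * form m B (basis_el Y) (basis_el T))
      = (\<Sum>Y\<in>?P. if Y = {} then B {} T else 0)"
  proof (rule sum.cong[OF refl])
    fix Y assume "Y \<in> ?P"
    then have Y: "Y \<subseteq> {..<m}" by simp
    show "coprod (basis_el {x}) Y {x} * form m B (basis_el Y) (basis_el T) = (if Y = {} then B {} T else 0)"
    proof (cases "Y = {}")
      case True
      have "coprod (basis_el {x}) Y {x} = (1::'k)" using True by (simp add: coprod_def basis_el_def shsign_def)
      then show ?thesis using form_basis_both[of "{}" m T B] T True by simp
    next
      case False
      have "Y \<inter> {x} = {} \<Longrightarrow> Y \<union> {x} \<noteq> {x}" using False by auto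
      then show ?thesis using False unfolding coprod_def basis_el_def by auto
    qed
  qed
  moreover have "(\<Sum>Y\<in>?P. if Y = {} then B {} T else 0) = B {} T" by simp
  ultimately show ?thesis by simp
qed



lemma claimII:
  fixes v :: "nat \<Rightarrow> nat \<Rightarrow> 'k::field_char_0"
  assumes Y: "Y \<subseteq> {..<m}" and lv: "\<forall>i<n. (\<Sum>j<m. lam j * v i j) = 0"
  shows "(\<Sum>j<m. lam j * coprod (mu n v) Y {j}) = 0"
proof -
  have fY: "finite Y" using Y finite_subset by blast
  show ?thesis
  proof (cases "card Y + 1 = n")
    case False
    show ?thesis
    proof (rule sum.neutral, intro ballI)
      fix j
      show "lam j * coprod (mu n v) Y {j} = 0"
        using False fY by (auto simp: coprod_def mu_def card_insert_if)
    qed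
  next
    case True
    define ys where "ys = sorted_list_of_set Y"
    define k where "k = card Y"
    have lys: "length ys = k" unfolding ys_def k_def by simp
    have sys: "set ys = Y" unfolding ys_def using fY by simp
    have nk: "n = Suc k" using True k_def by simp
    have kn: "k < n" using nk by simp
    define F0 where "F0 = (\<lambda>k' i. v i ((ys @ [0]) ! k'))"
    have lin: "Dm n (F0(k := (\<lambda>i. \<Sum>j\<in>{..<m}. lam j * v i j))) = (\<Sum>j\<in>{..<m}. lam j * Dm n (F0(k := (\<lambda>i. v i j))))"
      using Dm_lin[OF kn, of "{..<m}" F0 lam "\<lambda>j i. v i j"] by simp
    have "Dm n (F0(k := (\<lambda>i. \<Sum>j<m. lam j * v i j))) = Dm n (F0(k := (\<lambda>i. \<Sum>j\<in>{}. lam j * v i j)))"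
      by (rule Dm_cong) (use lv in auto)
    also have "\<dots> = 0" using Dm_lin[OF kn, of "{}" F0 lam "\<lambda>j i. v i j"] by simp
    finally have z: "Dm n (F0(k := (\<lambda>i. \<Sum>j<m. lam j * v i j))) = 0" .
    have eqj: "Dm n (F0(k := (\<lambda>i. v i j))) = coprod (mu n v) Y {j}" for j
    proof -
      have c: "Dm n (F0(k := (\<lambda>i. v i j))) = Dm n (\<lambda>k' i. v i ((ys @ [j]) ! k'))"
      proof (rule Dm_cong)
        fix k' i assume "k' < n" "i < n"
        then have "k' = k \<or> k' < k" using nk by auto
        then show "(F0(k := (\<lambda>i. v i j))) k' i = v i ((ys @ [j]) ! k')"
          unfolding F0_def by (auto simp: nth_append lys)
      qed
      show ?thesis
      proof (cases "j \<in> Y")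
        case True
        then obtain q where q: "q < length ys" "ys ! q = j" using sys by (metis in_set_conv_nth)
        have "Dm n (\<lambda>k' i. v i ((ys @ [j]) ! k')) = 0"
          by (rule Dm_ident[of q n k]) (use q lys nk in \<open>auto simp: nth_append\<close>)
        then show ?thesis using c True by (simp add: coprod_def)
      next
        case False
        have "Dm n (\<lambda>k' i. v i ((ys @ [j]) ! k')) = shsign Y {j} * mu n v (insert j Y)"
          unfolding ys_def by (rule contr_right[OF fY False True])
        then show ?thesis using c False by (simp add: coprod_def)
      qed
    qed
    have "(\<Sum>j<m. lam j * coprod (mu n v) Y {j}) = (\<Sum>j<m. lam j * Dm n (F0(k := (\<lambda>i. v i j))))"
      by (simp add: eqj)
    also have "\<dots> = 0" using lin z by simp
    finally show ?thesis .
  qed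
qed

lemma claimI:
  fixes w :: "nat \<Rightarrow> nat \<Rightarrow> 'k::field_char_0"
  assumes U: "U \<subseteq> {..<m}" and lx: "(\<Sum>j<m. lam j * x j) = 1"
    and lw: "\<forall>i<l. (\<Sum>j<m. lam j * w i j) = 0"
  shows "(\<Sum>j<m. lam j * coprod (mu (Suc l) (\<lambda>i. if i = 0 then x else w (i - 1))) {j} U) = mu l w U"
proof -
  define u where "u = (\<lambda>i. if i = 0 then x else w (i - 1))"
  have fU: "finite U" using U finite_subset by blast
  show ?thesis
  proof (cases "card U = l")
    case False
    have "mu l w U = 0" using False by (simp add: mu_def)
    moreover have "(\<Sum>j<m. lam j * coprod (mu (Suc l) u) {j} U) = 0"
    proof (rule sum.neutral, intro ballI)
      fix j
      show "lam j * coprod (mu (Suc l) u) {j} U = 0"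
        using False fU by (auto simp: coprod_def mu_def card_insert_if)
    qed
    ultimately show ?thesis unfolding u_def by simp
  next
    case True
    define us where "us = sorted_list_of_set U"
    have lus: "length us = l" unfolding us_def using True by simp
    have sus: "set us = U" unfolding us_def using fU by simp
    define F0 where "F0 = (\<lambda>k' i. u i ((0 # us) ! k'))"
    have lin: "Dm (Suc l) (F0(0 := (\<lambda>i. \<Sum>j\<in>{..<m}. lam j * u i j))) = (\<Sum>j\<in>{..<m}. lam j * Dm (Suc l) (F0(0 := (\<lambda>i. u i j))))"
      using Dm_lin[of 0 "Suc l" "{..<m}" F0 lam "\<lambda>j i. u i j"] by simp
    have col: "(F0(0 := (\<lambda>i. \<Sum>j\<in>{..<m}. lam j * u i j))) 0 i = (if i = 0 then 1 else 0)" if "i < Suc l" for i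
    proof (cases i)
      case 0 then show ?thesis using lx by (simp add: u_def)
    next
      case (Suc i') then show ?thesis using lw that by (simp add: u_def)
    qed
    have "Dm (Suc l) (F0(0 := (\<lambda>i. \<Sum>j\<in>{..<m}. lam j * u i j))) = Dm l (\<lambda>k i. (F0(0 := (\<lambda>i. \<Sum>j\<in>{..<m}. lam j * u i j))) (Suc k) (Suc i))"
      by (rule Dm_lap) (rule col)
    also have "\<dots> = Dm l (\<lambda>k i. w i (us ! k))" by (simp add: F0_def u_def)
    also have "\<dots> = mu l w U" unfolding us_def by (rule mu_Dm[symmetric, OF fU True])
    finally have lap: "Dm (Suc l) (F0(0 := (\<lambda>i. \<Sum>j\<in>{..<m}. lam j * u i j))) = mu l w U" .
    have eqj: "Dm (Suc l) (F0(0 := (\<lambda>i. u i j))) = coprod (mu (Suc l) u) {j} U" for j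
    proof -
      have c: "Dm (Suc l) (F0(0 := (\<lambda>i. u i j))) = Dm (Suc l) (\<lambda>k' i. u i ((j # us) ! k'))"
        by (rule Dm_cong) (auto simp: F0_def nth_Cons')
      show ?thesis
      proof (cases "j \<in> U")
        case True
        then obtain q where q: "q < length us" "us ! q = j" using sus by (metis in_set_conv_nth)
        have "Dm (Suc l) (\<lambda>k' i. u i ((j # us) ! k')) = 0"
          by (rule Dm_ident[of 0 "Suc l" "Suc q"]) (use q lus in auto)
        then show ?thesis using c True by (simp add: coprod_def)
      next
        case False
        have "Dm (Suc l) (\<lambda>k' i. u i ((j # us) ! k')) = shsign {j} U * mu (Suc l) u (insert j U)"
          unfolding us_def by (rule contr_left[OF fU False]) (simp add: True)
        then show ?thesis using c False by (simp add: coprod_def)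
      qed
    qed
    have "(\<Sum>j<m. lam j * coprod (mu (Suc l) u) {j} U) = (\<Sum>j<m. lam j * Dm (Suc l) (F0(0 := (\<lambda>i. u i j))))"
      by (simp add: eqj)
    also have "\<dots> = mu l w U" using lin lap by simp
    finally show ?thesis unfolding u_def .
  qed
qed



theorem proposition9p1:
  fixes m :: nat and d :: int and B :: "nat set \<Rightarrow> nat set \<Rightarrow> 'k::field_char_0"
  assumes "m \<ge> 1"
    and "symmetric_form_deg m d B"
    and "cyclic_form m B"
  shows "(\<forall>n (v :: nat \<Rightarrow> nat \<Rightarrow> 'k). n \<le> m - 1 \<and> (\<forall>i<n. v i \<in> vecs m) \<and> lin_indep n v
            \<longrightarrow> form m B unit_el (mu n v) = 0)
       \<and> (\<forall>n l (v :: nat \<Rightarrow> nat \<Rightarrow> 'k) w. l \<le> m - 1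
            \<and> (\<forall>i<n. v i \<in> vecs m) \<and> (\<forall>j<l. w j \<in> vecs m)
            \<and> lin_indep n v \<and> lin_indep l w \<and> (\<forall>i<n. in_span l w (v i))
            \<longrightarrow> form m B (mu n v) (mu l w) = 0)"
proof (intro conjI allI impI)
  have m1: "m \<ge> 1" and cyc: "cyclic_form m B" using assms by auto
  fix n :: nat and v :: "nat \<Rightarrow> nat \<Rightarrow> 'k"
  assume h: "n \<le> m - 1 \<and> (\<forall>i<n. v i \<in> vecs m) \<and> lin_indep n v"
  have "form m B unit_el (mu n v) = (\<Sum>T\<in>Pow {..<m}. mu n v T * B {} T)"
    unfolding unit_el_def by (rule form_basis_left) simp
  also have "\<dots> = 0"
  proof (rule sum.neutral, intro ballI)
    fix T assume "T \<in> Pow {..<m}"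
    then have T: "T \<subseteq> {..<m}" by simp
    have fT: "finite T" using T finite_subset by blast
    show "mu n v T * B {} T = 0"
    proof (cases "card T = n")
      case True
      have "\<exists>x<m. x \<notin> T"
      proof (rule ccontr)
        assume "\<not> (\<exists>x<m. x \<notin> T)"
        then have "{..<m} \<subseteq> T" by auto
        then have "card {..<m} \<le> card T" by (rule card_mono[OF fT])
        then have "m \<le> card T" by simp
        then show False using True conjunct1[OF h] m1 by linarith
      qed
      then obtain x where "x < m" "x \<notin> T" by blast
      then have "B {} T = 0" by (rule B_empty_zero[OF cyc T])
      then show ?thesis by simp
    next
      case False
      then show ?thesis by (simp add: mu_def)
    qed
  qed
  finally show "form m B unit_el (mu n v) = 0" .
next
  have m1: "m \<ge> 1" and cyc: "cyclic_form m B" using assms by auto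
  fix n l :: nat and v w :: "nat \<Rightarrow> nat \<Rightarrow> 'k"
  assume h: "l \<le> m - 1 \<and> (\<forall>i<n. v i \<in> vecs m) \<and> (\<forall>j<l. w j \<in> vecs m)
            \<and> lin_indep n v \<and> lin_indep l w \<and> (\<forall>i<n. in_span l w (v i))"
  have lm: "l < m" using h m1 by auto
  obtain lam :: "nat \<Rightarrow> 'k" where lw: "\<forall>i<l. (\<Sum>j<m. lam j * w i j) = 0" and "\<exists>j0<m. lam j0 \<noteq> 0"
    using annih[OF lm, of w] by blast
  then obtain j0 where j0: "j0 < m" "lam j0 \<noteq> 0" by blast
  define x where "x j = (if j = j0 then inverse (lam j0) else 0)" for j
  have "(\<Sum>j<m. lam j * x j) = (\<Sum>j<m. if j = j0 then 1 else 0)"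
    by (rule sum.cong) (auto simp: x_def j0)
  then have lx: "(\<Sum>j<m. lam j * x j) = 1" using j0 by simp
  have lv: "\<forall>i<n. (\<Sum>j<m. lam j * v i j) = 0"
  proof (intro allI impI)
    fix i assume i: "i < n"
    have "in_span l w (v i)" using h i by blast
    then obtain c where c: "\<forall>j. v i j = (\<Sum>k<l. c k * w k j)" unfolding in_span_def by blast
    have "(\<Sum>j<m. lam j * v i j) = (\<Sum>j<m. \<Sum>k<l. c k * (lam j * w k j))"
      by (simp add: c sum_distrib_left mult_ac)
    also have "\<dots> = (\<Sum>k<l. \<Sum>j<m. c k * (lam j * w k j))" by (rule sum.swap)
    also have "\<dots> = (\<Sum>k<l. c k * (\<Sum>j<m. lam j * w k j))" by (simp add: sum_distrib_left)
    also have "\<dots> = 0" using lw by simp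
    finally show "(\<Sum>j<m. lam j * v i j) = 0" .
  qed
  define u where "u = (\<lambda>i. if i = 0 then x else w (i - 1))"
  have xv: "x \<in> vecs m" using j0 unfolding vecs_def x_def by auto
  have wv: "\<forall>j<l. w j \<in> vecs m" using h by blast
  have uv: "\<forall>i<Suc l. u i \<in> vecs m"
  proof (intro allI impI)
    fix i assume i: "i < Suc l"
    show "u i \<in> vecs m"
    proof (cases i)
      case 0 then show ?thesis using xv by (simp add: u_def)
    next
      case (Suc i') then show ?thesis using wv i by (simp add: u_def)
    qed
  qed
  have vv: "\<forall>i<n. v i \<in> vecs m" using h by blast
  have aC: "mu n v \<in> Cel m" using vv by (rule mu_Cel)
  have bC: "mu (Suc l) u \<in> Cel m" using uv by (rule mu_Cel)
  have "form m B (mu n v) (mu l w) = form m B (mu n v) (\<lambda>U. \<Sum>j<m. lam j * coprod (mu (Suc l) u) {j} U)"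
  proof (rule form_cong_r)
    fix T assume "T \<subseteq> {..<m}"
    then show "mu l w T = (\<Sum>j<m. lam j * coprod (mu (Suc l) u) {j} T)"
      unfolding u_def by (rule claimI[OF _ lx lw, symmetric])
  qed
  also have "\<dots> = form m B (\<lambda>Y. \<Sum>j<m. lam j * coprod (mu n v) Y {j}) (mu (Suc l) u)"
    by (rule cyc_contr[OF cyc aC bC])
  also have "\<dots> = form m B (\<lambda>_. 0) (mu (Suc l) u)"
  proof (rule form_cong_l)
    fix T assume "T \<subseteq> {..<m}"
    then show "(\<Sum>j<m. lam j * coprod (mu n v) T {j}) = 0" by (rule claimII[OF _ lv])
  qed
  also have "\<dots> = 0" by (rule form_zero_l)
  finally show "form m B (mu n v) (mu l w) = 0" .
qed


end
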